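(* Let $1<\alpha<2$, $h>0$, and let $G:\mathbb{R}\to\mathbb{R}$ be continuous. Let $(x_n)_{n\ge0}$ be a real sequence of one of the following three kinds: (a) (Caputo universal fractional map) for constants $b_0,b_1\in\mathbb{R}$, $$x_{n+1}=b_0+b_1h(n+1)-\frac{h^{\alpha}}{\Gamma(\alpha)}\sum_{k=0}^{n}G(x_k)\,(n-k+1)^{\alpha-1},\quad n\ge0;$$ (b) (Caputo $h$-difference universal map) for constants $c_0,c_1\in\mathbb{R}$, $$x_{n+1}=c_0+c_1h(n+1)-\frac{h^{\alpha}}{\Gamma(\alpha)}\sum_{s=0}^{n-1}\frac{\Gamma(n-s-1+\alpha)}{\Gamma(n-s)}\,G(x_{s+1}),\quad n\ge0;$$ (c) (Riemann–Liouville universal fractional map) for a constant $c_1\in\mathbb{R}$, $$x_{n}=\frac{c_1}{\Gamma(\alpha)}(nh)^{\alpha-1}-\frac{h^{\alpha}}{\Gamma(\alpha)}\sum_{k=0}^{n-1}(n-k)^{\alpha-1}G(x_k),\quad n\ge1.$$ Set $U(n)=n^{\alpha-1}$ in cases (a),(c) and $U(n)=\Gamma(n+\alpha-1)/\Gamma(n)$ in case (b), for $n\ge1$, with $U(0)=0$, and define the convergent series $$\tilde W_\alpha=\sum_{n=1}^{\infty}(-1)^{n+1}\bigl[U(n)-U(n-1)\bigr].$$ Suppose the limits $x_o=\lim_{n\to\infty}x_{2n+1}$ and $x_e=\lim_{n\to\infty}x_{2n}$ exist in $\mathbb{R}$ (an asymptotic period-two sink). Then $$G(x_o)+G(x_e)=0,\qquad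 x_o-x_e=\frac{\tilde W_\alpha}{2\Gamma(\alpha)}\,h^{\alpha}\bigl[G(x_o)-G(x_e)\bigr].$$
   Context: Here $G=G_K$ is the nonlinearity of the map and $\Gamma$ is the gamma function. In case (a) the first sum term at $k=n$ equals $G(x_n)$; in case (b) the kernel is the falling factorial $(n-s-2+\alpha)^{(\alpha-1)}=\Gamma(n-s-1+\alpha)/\Gamma(n-s)$. *)

theory Defs
  imports "HOL-Analysis.Analysis"
begin

definition U_pow :: "real \<Rightarrow> nat \<Rightarrow> real" where
  "U_pow \<alpha> n = (if n = 0 then 0 else real n powr (\<alpha> - 1))"

definition U_gamma :: "real \<Rightarrow> nat \<Rightarrow> real" where
  "U_gamma \<alpha> n = (if n = 0 then 0 else Gamma (real n + \<alpha> - 1) / Gamma (real n))"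

definition W_tilde :: "(nat \<Rightarrow> real) \<Rightarrow> real" where
  "W_tilde U = (\<Sum>n. (-1) ^ n * (U (Suc n) - U n))"

end

theory Submission
  imports Defs "HOL-Real_Asymp.Real_Asymp"
begin


lemma sum_reflect: "(\<Sum>k\<le>n. f (n - k)) = (\<Sum>k\<le>(n::nat). f k)"
  by (rule sum.reindex_bij_witness[of _ "\<lambda>k. n-k" "\<lambda>k. n-k"]) auto

lemma neg1_pow_diff: "j \<le> n \<Longrightarrow> (-1::real)^(n-j) = (-1)^n * (-1)^j"
proof -
  assume "j \<le> n"
  hence "(-1::real)^n = (-1)^(n-j) * (-1)^j" by (simp add: power_add[symmetric])
  moreover have "(-1::real)^j * (-1)^j = 1" by (simp add: power_add[symmetric] flip: mult_2)
  ultimately show ?thesis by (metis mult.assoc mult.right_neutral)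
qed

lemma even_odd_tendsto:
  fixes f :: "nat \<Rightarrow> real"
  assumes "(\<lambda>n. f (2*n)) \<longlonglongrightarrow> L" "(\<lambda>n. f (2*n+1)) \<longlonglongrightarrow> L"
  shows "f \<longlonglongrightarrow> L"
proof (rule LIMSEQ_I)
  fix r :: real assume r: "0 < r"
  obtain N1 where N1: "\<forall>n\<ge>N1. norm (f (2*n) - L) < r" using LIMSEQ_D[OF assms(1) r] by blast
  obtain N2 where N2: "\<forall>n\<ge>N2. norm (f (2*n+1) - L) < r" using LIMSEQ_D[OF assms(2) r] by blast
  show "\<exists>no. \<forall>n\<ge>no. norm (f n - L) < r"
  proof (intro exI allI impI)
    fix n assume n: "n \<ge> 2 * max N1 N2"
    show "norm (f n - L) < r"
    proof (cases "even n")
      case True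
      then obtain m where m: "n = 2*m" by blast
      thus ?thesis using N1 n by auto
    next
      case False
      then obtain m where m: "n = 2*m+1" using oddE by blast
      thus ?thesis using N2 n by auto
    qed
  qed
qed

lemma sub_even: "f \<longlonglongrightarrow> (L::real) \<Longrightarrow> (\<lambda>n. f (2*n)) \<longlonglongrightarrow> L"
  using LIMSEQ_subseq_LIMSEQ[of f L "\<lambda>n. 2*n"] by (simp add: strict_mono_def o_def)
lemma sub_odd: "f \<longlonglongrightarrow> (L::real) \<Longrightarrow> (\<lambda>n. f (2*n+1)) \<longlonglongrightarrow> L"
  using LIMSEQ_subseq_LIMSEQ[of f L "\<lambda>n. 2*n+1"] by (simp add: strict_mono_def o_def)

lemma toeplitz:
  fixes e :: "nat \<Rightarrow> real" and w :: "nat \<Rightarrow> nat \<Rightarrow> real"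
  assumes e: "e \<longlonglongrightarrow> 0" and w0: "\<And>n k. 0 \<le> w n k"
    and wB: "\<And>n. (\<Sum>k\<le>n. w n k) \<le> B" and wl: "\<And>k. (\<lambda>n. w n k) \<longlonglongrightarrow> 0"
  shows "(\<lambda>n. \<Sum>k\<le>n. e k * w n k) \<longlonglongrightarrow> 0"
proof (rule LIMSEQ_I)
  fix r :: real assume r: "0 < r"
  have B: "0 \<le> B" using wB[of 0] w0[of 0 0] by simp
  define q where "q = r / (2 * (B + 1))"
  have q: "0 < q" using r B by (simp add: q_def)
  obtain K where K: "\<forall>k\<ge>K. norm (e k - 0) < q" using LIMSEQ_D[OF e q] by blast
  have "(\<lambda>n. \<Sum>k<K. \<bar>e k\<bar> * w n k) \<longlonglongrightarrow> (\<Sum>k<K. \<bar>e k\<bar> * 0)"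
    by (intro tendsto_intros wl)
  hence "(\<lambda>n. \<Sum>k<K. \<bar>e k\<bar> * w n k) \<longlonglongrightarrow> 0" by simp
  moreover have "0 < r/2" using r by simp
  ultimately obtain N where N: "\<forall>n\<ge>N. norm ((\<Sum>k<K. \<bar>e k\<bar> * w n k) - 0) < r/2"
    using LIMSEQ_D by blast
  show "\<exists>no. \<forall>n\<ge>no. norm ((\<Sum>k\<le>n. e k * w n k) - 0) < r"
  proof (intro exI allI impI)
    fix n assume n: "n \<ge> max N K"
    have split: "{..n} = {..<K} \<union> {K..n}" using n by auto
    have "\<bar>\<Sum>k\<le>n. e k * w n k\<bar> \<le> (\<Sum>k\<le>n. \<bar>e k\<bar> * w n k)"
      by (rule order_trans[OF sum_abs]) (simp add: abs_mult w0)
    also have "\<dots> = (\<Sum>k<K. \<bar>e k\<bar> * w n k) + (\<Sum>k\<in>{K..n}. \<bar>e k\<bar> * w n k)"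
      unfolding split by (rule sum.union_disjoint) auto
    also have "(\<Sum>k\<in>{K..n}. \<bar>e k\<bar> * w n k) \<le> (\<Sum>k\<in>{K..n}. q * w n k)"
      using K w0 by (intro sum_mono mult_right_mono) auto
    also have "\<dots> = q * (\<Sum>k\<in>{K..n}. w n k)" by (simp add: sum_distrib_left)
    also have "(\<Sum>k\<in>{K..n}. w n k) \<le> (\<Sum>k\<le>n. w n k)"
      by (rule sum_mono2) (auto simp: w0)
    hence "q * (\<Sum>k\<in>{K..n}. w n k) \<le> q * B" using wB[of n] q
      by (meson mult_left_mono order_trans less_imp_le)
    also have "q * B < r/2" using r B by (simp add: q_def field_simps)
    finally show "norm ((\<Sum>k\<le>n. e k * w n k) - 0) < r"
      using N n by auto
  qed
qed

lemma filterlim_minus_nat: "filterlim (\<lambda>n::nat. n - k) sequentially sequentially"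
  unfolding filterlim_at_top eventually_sequentially
proof (intro allI)
  fix z show "\<exists>N. \<forall>n\<ge>N. z \<le> n - k" by (rule exI[of _ "z+k"]) auto
qed

lemma core:
  fixes d g x \<beta> :: "nat \<Rightarrow> real"
  assumes d0: "\<And>n. 0 \<le> d n" and dm: "\<And>n. d (Suc n) \<le> d n" and dl: "d \<longlonglongrightarrow> 0"
    and Dl: "filterlim (\<lambda>n. \<Sum>j\<le>n. d j) at_top sequentially"
    and go: "(\<lambda>n. g (2*n+1)) \<longlonglongrightarrow> go" and ge: "(\<lambda>n. g (2*n)) \<longlonglongrightarrow> ge"
    and xo: "(\<lambda>n. x (2*n+1)) \<longlonglongrightarrow> xo" and xe: "(\<lambda>n. x (2*n)) \<longlonglongrightarrow> xe"
    and C: "C \<noteq> 0" and \<beta>: "\<beta> \<longlonglongrightarrow> \<beta>0"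
    and rec: "\<And>n. n \<ge> N \<Longrightarrow> x (Suc n) - x n = \<beta> n - C * (\<Sum>k\<le>n. g k * d (n-k))"
  shows "go + ge = 0 \<and> xo - xe = C * (\<Sum>n. (-1)^n * d n) * (go - ge) / 2"
proof -
  define a where "a = (go+ge)/2"
  define b where "b = (ge-go)/2"
  define e where "e = (\<lambda>k. g k - a - (-1)^k * b)"
  define D where "D = (\<lambda>n. \<Sum>j\<le>n. d j)"
  define A where "A = (\<lambda>n. \<Sum>j\<le>n. (-1)^j * d j)"
  define E where "E = (\<lambda>n. \<Sum>k\<le>n. e k * d (n-k))"
  define T where "T = (\<lambda>n. \<Sum>k\<le>n. g k * d (n-k))"
  define W where "W = (\<Sum>n. (-1)^n * d n)"
  have e0: "e \<longlonglongrightarrow> 0"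
  proof (rule even_odd_tendsto)
    have "(\<lambda>n. g (2*n) - a - b) \<longlonglongrightarrow> ge - a - b" by (intro tendsto_diff tendsto_add tendsto_mult tendsto_divide tendsto_const ge)
    thus "(\<lambda>n. e (2*n)) \<longlonglongrightarrow> 0" by (simp add: e_def a_def b_def field_simps)
    have "(\<lambda>n. g (2*n+1) - a + b) \<longlonglongrightarrow> go - a + b" by (intro tendsto_diff tendsto_add tendsto_mult tendsto_divide tendsto_const go)
    thus "(\<lambda>n. e (2*n+1)) \<longlonglongrightarrow> 0" by (simp add: e_def a_def b_def field_simps)
  qed
  have Tdec: "T n = a * D n + b * (-1)^n * A n + E n" for n
  proof -
    have "T n = (\<Sum>k\<le>n. a * d (n-k) + b * ((-1)^k * d (n-k)) + e k * d (n-k))"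
      unfolding T_def by (intro sum.cong refl) (simp add: e_def algebra_simps)
    also have "\<dots> = a * (\<Sum>k\<le>n. d (n-k)) + b * (\<Sum>k\<le>n. (-1)^k * d (n-k)) + E n"
      by (simp add: sum.distrib sum_distrib_left E_def)
    also have "(\<Sum>k\<le>n. d (n-k)) = D n" unfolding D_def by (rule sum_reflect)
    also have "(\<Sum>k\<le>n. (-1)^k * d (n-k)) = (\<Sum>k\<le>n. (-1::real)^(n-k) * d (n-(n-k)))"
      by (rule sum_reflect[symmetric])
    also have "\<dots> = (\<Sum>k\<le>n. (-1)^n * ((-1)^k * d k))"
      by (intro sum.cong refl) (simp add: neg1_pow_diff)
    also have "\<dots> = (-1)^n * A n" by (simp add: A_def sum_distrib_left)
    finally show ?thesis by (simp add: algebra_simps)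
  qed
  have summ: "summable (\<lambda>n. (-1)^n * d n)" by (rule summable_Leibniz'(1)[OF dl d0 dm])
  have Aw: "A \<longlonglongrightarrow> W" unfolding A_def W_def by (rule summable_LIMSEQ'[OF summ])
  have Dinf: "filterlim D at_infinity sequentially"
    using Dl filterlim_at_top_imp_at_infinity unfolding D_def by blast
  have Dpos: "eventually (\<lambda>n. D n \<ge> 1) sequentially"
    using Dl unfolding D_def filterlim_at_top by blast
  have D0: "0 \<le> D n" for n unfolding D_def by (intro sum_nonneg d0)
  have dshift: "(\<lambda>n. d (n - k)) \<longlonglongrightarrow> 0" for k
  proof -
    show ?thesis by (rule filterlim_compose[OF dl filterlim_minus_nat])
  qed
  have ED: "(\<lambda>n. E n / D n) \<longlonglongrightarrow> 0"
  proof -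
    have "(\<lambda>n. \<Sum>k\<le>n. e k * (d (n-k) / D n)) \<longlonglongrightarrow> 0"
    proof (rule toeplitz[OF e0])
      show "0 \<le> d (n-k) / D n" for n k using d0 D0 by simp
      show "(\<Sum>k\<le>n. d (n-k) / D n) \<le> 1" for n
      proof -
        have "(\<Sum>k\<le>n. d (n-k) / D n) = D n / D n"
          by (simp add: sum_divide_distrib[symmetric] sum_reflect D_def)
        thus ?thesis by simp
      qed
      show "(\<lambda>n. d (n-k) / D n) \<longlonglongrightarrow> 0" for k by (rule tendsto_divide_0[OF dshift Dinf])
    qed
    thus ?thesis by (simp add: E_def sum_divide_distrib)
  qed
  have Ediff: "(\<lambda>n. E (Suc n) - E n) \<longlonglongrightarrow> 0"
  proof -
    have eq: "E (Suc n) - E n = e (Suc n) * d 0 - (\<Sum>k\<le>n. e k * (d (n-k) - d (Suc (n-k))))" for n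
    proof -
      have "E (Suc n) = (\<Sum>k\<le>n. e k * d (Suc (n-k))) + e (Suc n) * d 0"
        unfolding E_def by (simp add: Suc_diff_le)
      thus ?thesis by (simp add: E_def algebra_simps sum_subtractf)
    qed
    have t1: "(\<lambda>n. e (Suc n) * d 0) \<longlonglongrightarrow> 0 * d 0"
      by (intro tendsto_diff tendsto_add tendsto_mult tendsto_divide tendsto_const LIMSEQ_Suc[OF e0])
    have t2: "(\<lambda>n. \<Sum>k\<le>n. e k * (d (n-k) - d (Suc (n-k)))) \<longlonglongrightarrow> 0"
    proof (rule toeplitz[OF e0])
      show "0 \<le> d (n-k) - d (Suc (n-k))" for n k using dm[of "n-k"] by simp
      show "(\<Sum>k\<le>n. d (n-k) - d (Suc (n-k))) \<le> d 0" for n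
      proof -
        have "(\<Sum>k\<le>n. d (n-k) - d (Suc (n-k))) = (\<Sum>k\<le>n. d k - d (Suc k))"
          by (rule sum_reflect[where f="\<lambda>j. d j - d (Suc j)"])
        also have "\<dots> = d 0 - d (Suc n)" by (rule sum_telescope)
        finally show ?thesis using d0[of "Suc n"] by simp
      qed
      show "(\<lambda>n. d (n-k) - d (Suc (n-k))) \<longlonglongrightarrow> 0" for k
      proof -
        have "(\<lambda>n. d (n - k) - d (Suc (n - k))) \<longlonglongrightarrow> 0 - 0"
          by (intro tendsto_diff dshift) (rule filterlim_compose[OF LIMSEQ_Suc[OF dl] filterlim_minus_nat])
        thus ?thesis by simp
      qed
    qed
    have "(\<lambda>n. e (Suc n) * d 0 - (\<Sum>k\<le>n. e k * (d (n-k) - d (Suc (n-k))))) \<longlonglongrightarrow> 0 * d 0 - 0"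
      by (intro tendsto_diff tendsto_add tendsto_mult tendsto_divide tendsto_const t1 t2)
    thus ?thesis by (simp add: eq)
  qed
  have Tform: "T n = (\<beta> n - (x (Suc n) - x n)) / C" if "n \<ge> N" for n
    using rec[OF that] C by (simp add: T_def field_simps)
  have Te: "(\<lambda>m. T (2*m)) \<longlonglongrightarrow> (\<beta>0 - (xo - xe)) / C"
  proof (rule Lim_transform_eventually)
    show "(\<lambda>m. (\<beta> (2*m) - (x (2*m+1) - x (2*m))) / C) \<longlonglongrightarrow> (\<beta>0 - (xo - xe)) / C"
      by (intro tendsto_diff tendsto_add tendsto_mult tendsto_divide tendsto_const sub_even[OF \<beta>] xo xe C)
    show "eventually (\<lambda>m. (\<beta> (2*m) - (x (2*m+1) - x (2*m))) / C = T (2*m)) sequentially"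
      unfolding eventually_sequentially by (rule exI[of _ N]) (simp add: Tform)
  qed
  have To: "(\<lambda>m. T (2*m+1)) \<longlonglongrightarrow> (\<beta>0 - (xe - xo)) / C"
  proof (rule Lim_transform_eventually)
    have xe': "(\<lambda>m. x (2*(Suc m))) \<longlonglongrightarrow> xe" by (rule LIMSEQ_Suc[OF xe])
    show "(\<lambda>m. (\<beta> (2*m+1) - (x (2*(Suc m)) - x (2*m+1))) / C) \<longlonglongrightarrow> (\<beta>0 - (xe - xo)) / C"
      by (intro tendsto_diff tendsto_add tendsto_mult tendsto_divide tendsto_const sub_odd[OF \<beta>] xo xe' C)
    show "eventually (\<lambda>m. (\<beta> (2*m+1) - (x (2*(Suc m)) - x (2*m+1))) / C = T (2*m+1)) sequentially"
      unfolding eventually_sequentially by (rule exI[of _ N]) (simp add: Tform)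
  qed
  have Dinf2: "filterlim (\<lambda>m. D (2*m)) at_infinity sequentially"
    by (rule filterlim_compose[OF Dinf]) (rule filterlim_subseq, simp add: strict_mono_def)
  have a0: "a = 0"
  proof -
    have "(\<lambda>m. T (2*m) / D (2*m) - b * (A (2*m) / D (2*m)) - E (2*m) / D (2*m)) \<longlonglongrightarrow> 0 - b * 0 - 0"
      by (intro tendsto_diff tendsto_add tendsto_mult tendsto_divide tendsto_const tendsto_divide_0[OF Te Dinf2] tendsto_divide_0[OF sub_even[OF Aw] Dinf2]
          sub_even[OF ED, simplified])
    moreover have "eventually (\<lambda>m. T (2*m) / D (2*m) - b * (A (2*m) / D (2*m)) - E (2*m) / D (2*m) = a) sequentially"
    proof -
      obtain M where M: "\<forall>n\<ge>M. D n \<ge> 1" using Dpos unfolding eventually_sequentially by blast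
      show ?thesis unfolding eventually_sequentially
      proof (intro exI allI impI)
        fix m assume "m \<ge> M"
        hence "D (2*m) \<ge> 1" using M by auto
        thus "T (2*m) / D (2*m) - b * (A (2*m) / D (2*m)) - E (2*m) / D (2*m) = a"
          by (simp add: Tdec field_simps)
      qed
    qed
    ultimately have "(\<lambda>m. a) \<longlonglongrightarrow> 0" by (simp add: Lim_transform_eventually)
    thus ?thesis by (simp add: LIMSEQ_const_iff)
  qed
  have Ee: "(\<lambda>m. E (2*m)) \<longlonglongrightarrow> (\<beta>0 - (xo - xe)) / C - b * W"
  proof -
    have "(\<lambda>m. T (2*m) - b * A (2*m)) \<longlonglongrightarrow> (\<beta>0 - (xo - xe)) / C - b * W"
      by (intro tendsto_diff tendsto_add tendsto_mult tendsto_divide tendsto_const Te sub_even[OF Aw])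
    thus ?thesis by (simp add: Tdec a0)
  qed
  have Eo: "(\<lambda>m. E (2*m+1)) \<longlonglongrightarrow> (\<beta>0 - (xe - xo)) / C + b * W"
  proof -
    have "(\<lambda>m. T (2*m+1) + b * A (2*m+1)) \<longlonglongrightarrow> (\<beta>0 - (xe - xo)) / C + b * W"
      by (intro tendsto_diff tendsto_add tendsto_mult tendsto_divide tendsto_const To sub_odd[OF Aw])
    thus ?thesis by (simp add: Tdec a0)
  qed
  have "(\<lambda>m. E (2*m+1) - E (2*m)) \<longlonglongrightarrow> ((\<beta>0 - (xe - xo)) / C + b * W) - ((\<beta>0 - (xo - xe)) / C - b * W)"
    by (intro tendsto_diff tendsto_add tendsto_mult tendsto_divide tendsto_const Ee Eo)
  moreover have "(\<lambda>m. E (2*m+1) - E (2*m)) \<longlonglongrightarrow> 0"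
    using sub_even[OF Ediff] by simp
  ultimately have "((\<beta>0 - (xe - xo)) / C + b * W) - ((\<beta>0 - (xo - xe)) / C - b * W) = 0"
    using LIMSEQ_unique by blast
  moreover have "((\<beta>0 - (xe - xo)) / C + b * W) - ((\<beta>0 - (xo - xe)) / C - b * W) = 2 * ((xo - xe) / C + b * W)"
    by (simp add: diff_divide_distrib add_divide_distrib algebra_simps)
  ultimately have "2 * ((xo - xe) / C + b * W) = 0" by metis
  hence "(xo - xe) / C + b * W = 0" by (metis mult_eq_0_iff zero_neq_numeral)
  hence "(xo - xe) / C = - b * W" by (simp add: eq_neg_iff_add_eq_0)
  hence "xo - xe = - C * b * W" using C by (simp add: divide_eq_eq algebra_simps)
  thus ?thesis using a0 by (simp add: a_def b_def W_def field_simps)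
qed



lemma pow_mvt:
  fixes p t :: real
  assumes p: "0 < p" "p < 1" and t: "1 \<le> t"
  shows "(t+1) powr p - t powr p \<le> p * t powr (p-1)"
    and "p * (t+1) powr (p-1) \<le> (t+1) powr p - t powr p"
proof -
  have "\<exists>z. t < z \<and> z < t+1 \<and> ((t+1) powr p - t powr p = ((t+1) - t) * (p * z powr (p-1)))"
    by (rule MVT2) (use t in \<open>auto intro!: has_real_derivative_powr\<close>)
  then obtain z where z: "t < z" "z < t+1" "(t+1) powr p - t powr p = p * z powr (p-1)" by auto
  have "z powr (p-1) \<le> t powr (p-1)" using z t p by (intro powr_mono2') auto
  thus "(t+1) powr p - t powr p \<le> p * t powr (p-1)" using z p by simp
  have "(t+1) powr (p-1) \<le> z powr (p-1)" using z t p by (intro powr_mono2') auto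
  thus "p * (t+1) powr (p-1) \<le> (t+1) powr p - t powr p" using z p by simp
qed

lemma U_pow_eq: "U_pow \<alpha> n = real n powr (\<alpha> - 1)"
  by (simp add: U_pow_def)

lemma U_pow_props:
  assumes "1 < \<alpha>" "\<alpha> < 2"
  defines "d \<equiv> \<lambda>j. U_pow \<alpha> (Suc j) - U_pow \<alpha> j"
  shows "\<And>n. 0 \<le> d n" "\<And>n. d (Suc n) \<le> d n" "d \<longlonglongrightarrow> 0"
    "filterlim (\<lambda>n. U_pow \<alpha> (Suc n)) at_top sequentially"
proof -
  define p where "p = \<alpha> - 1"
  have p: "0 < p" "p < 1" using assms by (auto simp: p_def)
  have dd: "d j = real (Suc j) powr p - real j powr p" for j
    by (simp add: d_def U_pow_eq p_def)
  show "0 \<le> d n" for n unfolding dd using p by (simp add: powr_mono2)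
  show "d (Suc n) \<le> d n" for n
  proof (cases n)
    case 0
    have "2 powr p \<le> 2 powr (1::real)" using p by (intro powr_mono) auto
    thus ?thesis using 0 p by (simp add: dd)
  next
    case (Suc m)
    have t: "1 \<le> real n" using Suc by simp
    have "d (Suc n) = (real n + 1 + 1) powr p - (real n + 1) powr p" by (simp add: dd add_ac)
    also have "\<dots> \<le> p * (real n + 1) powr (p-1)" using pow_mvt(1)[OF p, of "real n + 1"] t by simp
    also have "\<dots> \<le> (real n + 1) powr p - real n powr p" using pow_mvt(2)[OF p t] by simp
    also have "\<dots> = d n" by (simp add: dd add_ac)
    finally show ?thesis .
  qed
  show "d \<longlonglongrightarrow> 0" unfolding dd using p by real_asymp
  show "filterlim (\<lambda>n. U_pow \<alpha> (Suc n)) at_top sequentially"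
    unfolding U_pow_eq using p by (simp add: p_def[symmetric]) real_asymp
qed



lemma Gamma_plus1_pos: "(z::real) > 0 \<Longrightarrow> Gamma (z + 1) = z * Gamma z"
  by (rule Gamma_plus1) (auto dest: nonpos_Ints_nonpos)

lemma U_gamma_diff:
  assumes "1 < \<alpha>"
  shows "U_gamma \<alpha> (Suc j) - U_gamma \<alpha> j = (\<alpha> - 1) * Gamma (real j + \<alpha> - 1) / Gamma (real j + 1)"
proof (cases j)
  case 0
  have "Gamma \<alpha> = (\<alpha> - 1) * Gamma (\<alpha> - 1)"
    using Gamma_plus1_pos[of "\<alpha> - 1"] assms by simp
  thus ?thesis using 0 by (simp add: U_gamma_def)
next
  case (Suc m)
  have j: "real j > 0" using Suc by simp
  have g1: "Gamma (real j + \<alpha>) = (real j + \<alpha> - 1) * Gamma (real j + \<alpha> - 1)"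
    using Gamma_plus1_pos[of "real j + \<alpha> - 1"] assms j by (simp add: algebra_simps)
  have g2: "Gamma (real j + 1) = real j * Gamma (real j)"
    using Gamma_plus1_pos[of "real j"] j by simp
  have "Gamma (real j) > 0" by (rule Gamma_real_pos) (use j in simp)
  hence pos: "Gamma (real j) \<noteq> 0" by linarith
  have "U_gamma \<alpha> (Suc j) - U_gamma \<alpha> j
      = Gamma (real j + \<alpha>) / Gamma (real j + 1) - Gamma (real j + \<alpha> - 1) / Gamma (real j)"
    using Suc by (simp add: U_gamma_def add_ac)
  also have "\<dots> = (\<alpha> - 1) * Gamma (real j + \<alpha> - 1) / Gamma (real j + 1)"
    unfolding g1 g2 using pos j by (simp add: field_simps)
  finally show ?thesis .
qed

lemma U_gamma_Suc_series:
  assumes "1 < \<alpha>"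
  shows "U_gamma \<alpha> (Suc n) = Gamma (\<alpha> - 1) / Gamma_series (\<alpha> - 1) n * exp ((\<alpha> - 1) * ln (real n))"
proof -
  define z where "z = \<alpha> - 1"
  have z: "z > 0" using assms by (simp add: z_def)
  have znp: "z \<notin> \<int>\<^sub>\<le>\<^sub>0" using z by (auto dest: nonpos_Ints_nonpos)
  have pz: "pochhammer z (n+1) = Gamma (z + real (n+1)) / Gamma z"
    by (rule pochhammer_Gamma[OF znp])
  have fn: "fact n = Gamma (real n + 1)"
    using Gamma_fact[of n, where 'a=real] by (simp add: add.commute)
  have Gz: "Gamma z > 0" using z by simp
  have G2: "Gamma (z + real (n+1)) > 0" using z by simp
  have G3: "Gamma (real n + 1) > 0" by simp
  have "U_gamma \<alpha> (Suc n) = Gamma (z + real (n+1)) / Gamma (real n + 1)"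
    by (simp add: U_gamma_def z_def algebra_simps)
  also have "\<dots> = Gamma z / Gamma_series z n * exp (z * ln (real n))"
    unfolding Gamma_series_def pz fn using Gz G2 G3 by (simp add: field_simps)
  finally show ?thesis by (simp add: z_def)
qed

lemma U_gamma_props:
  assumes "1 < \<alpha>" "\<alpha> < 2"
  defines "d \<equiv> \<lambda>j. U_gamma \<alpha> (Suc j) - U_gamma \<alpha> j"
  shows "\<And>n. 0 \<le> d n" "\<And>n. d (Suc n) \<le> d n" "d \<longlonglongrightarrow> 0"
    "filterlim (\<lambda>n. U_gamma \<alpha> (Suc n)) at_top sequentially"
proof -
  define z where "z = \<alpha> - 1"
  have z: "0 < z" "z < 1" using assms by (auto simp: z_def)
  have dd: "d j = z * Gamma (real j + z) / Gamma (real j + 1)" for j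
    unfolding d_def U_gamma_diff[OF assms(1)] by (simp add: z_def algebra_simps)
  show "0 \<le> d n" for n unfolding dd using z by simp
  show "d (Suc n) \<le> d n" for n
  proof -
    have g1: "Gamma (real n + z + 1) = (real n + z) * Gamma (real n + z)"
      using Gamma_plus1_pos[of "real n + z"] z by simp
    have g2: "Gamma (real n + 1 + 1) = (real n + 1) * Gamma (real n + 1)"
      using Gamma_plus1_pos[of "real n + 1"] by simp
    have "d (Suc n) = z * ((real n + z) * Gamma (real n + z)) / ((real n + 1) * Gamma (real n + 1))"
      unfolding dd g1[symmetric] g2[symmetric] by (simp add: add_ac)
    also have "\<dots> = ((real n + z) / (real n + 1)) * d n" by (simp add: dd field_simps)
    also have "\<dots> \<le> 1 * d n"
      using z \<open>0 \<le> d n\<close> by (intro mult_right_mono) (auto simp: divide_le_eq_1)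
    finally show ?thesis by simp
  qed
  have "0 < Gamma z" by (rule Gamma_real_pos[OF z(1)])
  hence Gz: "Gamma z \<noteq> 0" by linarith
  have GS: "(\<lambda>n. Gamma z / Gamma_series z n) \<longlonglongrightarrow> Gamma z / Gamma z"
    by (intro tendsto_divide tendsto_const Gamma_series_LIMSEQ Gz)
  hence GS1: "(\<lambda>n. Gamma z / Gamma_series z n) \<longlonglongrightarrow> 1" using Gz by simp
  have Useries: "U_gamma \<alpha> (Suc n) = Gamma z / Gamma_series z n * exp (z * ln (real n))" for n
    using U_gamma_Suc_series[OF assms(1)] by (simp add: z_def)
  have ex: "filterlim (\<lambda>n::nat. exp (z * ln (real n))) at_top sequentially"
    using z by real_asymp
  show "filterlim (\<lambda>n. U_gamma \<alpha> (Suc n)) at_top sequentially"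
    unfolding Useries by (rule filterlim_tendsto_pos_mult_at_top[OF GS1 _ ex]) simp
  have dU: "d n = z / (real n + z) * U_gamma \<alpha> (Suc n)" for n
  proof -
    have g1: "Gamma (real n + z + 1) = (real n + z) * Gamma (real n + z)"
      using Gamma_plus1_pos[of "real n + z"] z by simp
    have "U_gamma \<alpha> (Suc n) = Gamma (real n + z + 1) / Gamma (real n + 1)"
      by (simp add: U_gamma_def z_def algebra_simps)
    moreover have "Gamma (1 + real n) > 0" by (rule Gamma_real_pos) simp
    hence "Gamma (1 + real n) \<noteq> 0" by linarith
    moreover have "z + real n \<noteq> 0" using z by linarith
    ultimately show ?thesis unfolding dd g1 using z by (simp add: field_simps)
  qed
  have ex2: "(\<lambda>n::nat. z / (real n + z) * exp (z * ln (real n))) \<longlonglongrightarrow> 0"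
    using z by real_asymp
  have "(\<lambda>n. Gamma z / Gamma_series z n * (z / (real n + z) * exp (z * ln (real n)))) \<longlonglongrightarrow> 1 * 0"
    by (intro tendsto_mult GS1 ex2)
  thus "d \<longlonglongrightarrow> 0" unfolding dU Useries by (simp add: algebra_simps)
qed


lemma telesc: "U 0 = 0 \<Longrightarrow> (\<Sum>j\<le>n. U (Suc j) - U j) = (U (Suc n) :: real)"
  by (induction n) auto

lemma caseAB:
  fixes x g U :: "nat \<Rightarrow> real"
  assumes xs: "\<And>n. x (Suc n) = c0 + c1 * h * real (Suc n) - C * (\<Sum>k\<le>n. g k * U (Suc (n-k)))"
    and U0: "U 0 = 0" and n: "n \<ge> 1"
  shows "x (Suc n) - x n = c1 * h - C * (\<Sum>k\<le>n. g k * (U (Suc (n-k)) - U (n-k)))"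
proof -
  obtain m where m: "n = Suc m" using n by (cases n) auto
  have "x n = c0 + c1 * h * real n - C * (\<Sum>k\<le>m. g k * U (Suc (m-k)))" using xs[of m] m by simp
  also have "(\<Sum>k\<le>m. g k * U (Suc (m-k))) = (\<Sum>k\<le>n. g k * U (n-k))"
    using m U0 by (simp add: Suc_diff_le)
  finally have xn: "x n = c0 + c1 * h * real n - C * (\<Sum>k\<le>n. g k * U (n-k))" .
  show ?thesis unfolding xn xs[of n]
    by (simp add: sum_subtractf algebra_simps right_diff_distrib)
qed

lemma caseC:
  fixes x g U :: "nat \<Rightarrow> real"
  assumes xs: "\<And>n. n \<ge> 1 \<Longrightarrow> x n = K * U n - C * (\<Sum>k<n. g k * U (n-k))"
    and U0: "U 0 = 0" and n: "n \<ge> 1"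
  shows "x (Suc n) - x n = K * (U (Suc n) - U n) - C * (\<Sum>k\<le>n. g k * (U (Suc (n-k)) - U (n-k)))"
proof -
  have a: "x (Suc n) = K * U (Suc n) - C * (\<Sum>k\<le>n. g k * U (Suc (n-k)))"
    using xs[of "Suc n"] by (simp add: lessThan_Suc_atMost Suc_diff_le)
  have b: "(\<Sum>k<n. g k * U (n-k)) = (\<Sum>k\<le>n. g k * U (n-k))"
    using U0 by (simp add: lessThan_Suc_atMost[symmetric])
  show ?thesis unfolding a xs[OF n] b
    by (simp add: sum_subtractf algebra_simps right_diff_distrib)
qed

theorem mainTheorem2:
  fixes \<alpha> h x_o x_e :: real and G :: "real \<Rightarrow> real" and x :: "nat \<Rightarrow> real"
    and U :: "nat \<Rightarrow> real"
  assumes "1 < \<alpha>" "\<alpha> < 2" "h > 0" "continuous_on UNIV G"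
    and cases:
      "(\<exists>b0 b1. (\<forall>n. x (n + 1) = b0 + b1 * h * real (n + 1)
            - h powr \<alpha> / Gamma \<alpha> * (\<Sum>k=0..n. G (x k) * real (n - k + 1) powr (\<alpha> - 1)))
          \<and> U = U_pow \<alpha>)
     \<or> (\<exists>c0 c1. (\<forall>n. x (n + 1) = c0 + c1 * h * real (n + 1)
            - h powr \<alpha> / Gamma \<alpha> *
              (\<Sum>s<n. Gamma (real n - real s - 1 + \<alpha>) / Gamma (real n - real s) * G (x (s + 1))))
          \<and> U = U_gamma \<alpha>)
     \<or> (\<exists>c1. (\<forall>n\<ge>1. x n = c1 / Gamma \<alpha> * (real n * h) powr (\<alpha> - 1)
            - h powr \<alpha> / Gamma \<alpha> * (\<Sum>k<n. real (n - k) powr (\<alpha> - 1) * G (x k)))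
          \<and> U = U_pow \<alpha>)"
    and odd_lim: "(\<lambda>n. x (2 * n + 1)) \<longlonglongrightarrow> x_o"
    and even_lim: "(\<lambda>n. x (2 * n)) \<longlonglongrightarrow> x_e"
  shows "G x_o + G x_e = 0
    \<and> x_o - x_e = W_tilde U / (2 * Gamma \<alpha>) * h powr \<alpha> * (G x_o - G x_e)"
  
proof -
  note a1 = assms(1) and a2 = assms(2) and hpos = assms(3)
  have cont: "isCont G y" for y using assms(4) by (simp add: continuous_on_eq_continuous_at)
  have Go: "(\<lambda>n. G (x (2*n+1))) \<longlonglongrightarrow> G x_o" by (rule isCont_tendsto_compose[OF cont odd_lim])
  have Ge: "(\<lambda>n. G (x (2*n))) \<longlonglongrightarrow> G x_e" by (rule isCont_tendsto_compose[OF cont even_lim])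
  define C where "C = h powr \<alpha> / Gamma \<alpha>"
  have Gpos: "Gamma \<alpha> > 0" by (rule Gamma_real_pos) (use a1 in simp)
  have C: "C \<noteq> 0" using Gpos hpos by (simp add: C_def)
  define d where "d = (\<lambda>j. U (Suc j) - U j)"
  have final: "G x_o + G x_e = 0 \<and> x_o - x_e = W_tilde U / (2 * Gamma \<alpha>) * h powr \<alpha> * (G x_o - G x_e)"
    if kern: "\<And>n. 0 \<le> d n" "\<And>n. d (Suc n) \<le> d n" "d \<longlonglongrightarrow> 0"
       "filterlim (\<lambda>n. U (Suc n)) at_top sequentially" and U0: "U 0 = 0"
    and rest: "(\<lambda>n. g (2*n+1)) \<longlonglongrightarrow> G x_o" "(\<lambda>n. g (2*n)) \<longlonglongrightarrow> G x_e" "\<beta> \<longlonglongrightarrow> \<beta>0"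
       "\<And>n. n \<ge> 1 \<Longrightarrow> x (Suc n) - x n = \<beta> n - C * (\<Sum>k\<le>n. g k * d (n-k))"
    for g \<beta> :: "nat \<Rightarrow> real" and \<beta>0
  proof -
    have Dl: "filterlim (\<lambda>n. \<Sum>j\<le>n. d j) at_top sequentially"
      unfolding d_def telesc[of U, OF U0] by (rule kern(4))
    have "G x_o + G x_e = 0 \<and> x_o - x_e = C * (\<Sum>n. (-1)^n * d n) * (G x_o - G x_e) / 2"
      by (rule core[OF kern(1,2,3) Dl rest(1,2) odd_lim even_lim C rest(3,4)])
    moreover have "(\<Sum>n. (-1)^n * d n) = W_tilde U" by (simp add: W_tilde_def d_def)
    moreover have "C * W_tilde U * (G x_o - G x_e) / 2 = W_tilde U / (2 * Gamma \<alpha>) * h powr \<alpha> * (G x_o - G x_e)"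
      unfolding C_def using Gpos by (simp add: field_simps)
    ultimately show ?thesis by simp
  qed
  from cases show ?thesis
  proof (elim disjE exE conjE)
    fix b0 b1 assume xa: "\<forall>n. x (n + 1) = b0 + b1 * h * real (n + 1)
            - h powr \<alpha> / Gamma \<alpha> * (\<Sum>k=0..n. G (x k) * real (n - k + 1) powr (\<alpha> - 1))"
      and U: "U = U_pow \<alpha>"
    have U0: "U 0 = 0" by (simp add: U U_pow_def)
    have xs: "x (Suc n) = b0 + b1 * h * real (Suc n) - C * (\<Sum>k\<le>n. G (x k) * U (Suc (n-k)))" for n
    proof -
      have "(\<Sum>k=0..n. G (x k) * real (n - k + 1) powr (\<alpha> - 1)) = (\<Sum>k\<le>n. G (x k) * U (Suc (n-k)))"
        by (simp add: atLeast0AtMost U U_pow_eq)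
      thus ?thesis using xa[rule_format, of n] by (simp add: C_def)
    qed
    show ?thesis
    proof (rule final)
      show "\<And>n. 0 \<le> d n" "\<And>n. d (Suc n) \<le> d n" "d \<longlonglongrightarrow> 0"
        "filterlim (\<lambda>n. U (Suc n)) at_top sequentially"
        using U_pow_props[OF a1 a2] by (simp_all add: d_def U)
      show "U 0 = 0" by (rule U0)
      show "(\<lambda>n. G (x (2*n+1))) \<longlonglongrightarrow> G x_o" "(\<lambda>n. G (x (2*n))) \<longlonglongrightarrow> G x_e" by (rule Go, rule Ge)
      show "(\<lambda>n. b1 * h) \<longlonglongrightarrow> b1 * h" by (rule tendsto_const)
      show "x (Suc n) - x n = b1 * h - C * (\<Sum>k\<le>n. G (x k) * d (n-k))" if "n \<ge> 1" for n
        using caseAB[OF xs U0 that] by (simp add: d_def Suc_diff_le)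
    qed
  next
    fix c0 c1 assume xb: "\<forall>n. x (n + 1) = c0 + c1 * h * real (n + 1)
            - h powr \<alpha> / Gamma \<alpha> *
              (\<Sum>s<n. Gamma (real n - real s - 1 + \<alpha>) / Gamma (real n - real s) * G (x (s + 1)))"
      and U: "U = U_gamma \<alpha>"
    have U0: "U 0 = 0" by (simp add: U U_gamma_def)
    define g where "g = (\<lambda>k. if k = 0 then 0 else G (x k))"
    have xs: "x (Suc n) = c0 + c1 * h * real (Suc n) - C * (\<Sum>k\<le>n. g k * U (Suc (n-k)))" for n
    proof -
      have s1: "(\<Sum>s<n. Gamma (real n - real s - 1 + \<alpha>) / Gamma (real n - real s) * G (x (s + 1)))
          = (\<Sum>s<n. G (x (Suc s)) * U (n - s))"
      proof (intro sum.cong refl)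
        fix s assume "s \<in> {..<n}"
        hence s: "s < n" by simp
        hence "real (n - s) = real n - real s" by simp
        moreover have "n - s \<noteq> 0" using s by simp
        ultimately show "Gamma (real n - real s - 1 + \<alpha>) / Gamma (real n - real s) * G (x (s + 1))
            = G (x (Suc s)) * U (n - s)"
          by (simp add: U U_gamma_def algebra_simps)
      qed
      have s2: "(\<Sum>s<n. G (x (Suc s)) * U (n - s)) = (\<Sum>k\<le>n. g k * U (Suc (n-k)))"
      proof (cases n)
        case 0 thus ?thesis by (simp add: g_def)
      next
        case (Suc m)
        have "(\<Sum>k\<le>n. g k * U (Suc (n-k))) = (\<Sum>i\<le>m. g (Suc i) * U (Suc (n - Suc i)))"
          unfolding Suc sum.atMost_Suc_shift by (simp add: g_def)
        also have "\<dots> = (\<Sum>i\<le>m. G (x (Suc i)) * U (n - i))"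
          by (intro sum.cong refl) (auto simp: g_def Suc Suc_diff_le)
        also have "\<dots> = (\<Sum>s<n. G (x (Suc s)) * U (n - s))"
          by (simp add: Suc lessThan_Suc_atMost)
        finally show ?thesis by simp
      qed
      show ?thesis using xb[rule_format, of n] s1 s2 by (simp add: C_def)
    qed
    show ?thesis
    proof (rule final)
      show "\<And>n. 0 \<le> d n" "\<And>n. d (Suc n) \<le> d n" "d \<longlonglongrightarrow> 0"
        "filterlim (\<lambda>n. U (Suc n)) at_top sequentially"
        using U_gamma_props[OF a1 a2] by (simp_all add: d_def U)
      show "U 0 = 0" by (rule U0)
      show "(\<lambda>n. g (2*n+1)) \<longlonglongrightarrow> G x_o" using Go by (simp add: g_def)
      show "(\<lambda>n. g (2*n)) \<longlonglongrightarrow> G x_e"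
      proof (rule Lim_transform_eventually[OF Ge])
        show "eventually (\<lambda>n. G (x (2*n)) = g (2*n)) sequentially"
          unfolding eventually_sequentially by (rule exI[of _ 1]) (auto simp: g_def)
      qed
      show "(\<lambda>n. c1 * h) \<longlonglongrightarrow> c1 * h" by (rule tendsto_const)
      show "x (Suc n) - x n = c1 * h - C * (\<Sum>k\<le>n. g k * d (n-k))" if "n \<ge> 1" for n
        using caseAB[OF xs U0 that] by (simp add: d_def Suc_diff_le)
    qed
  next
    fix c1 assume xc: "\<forall>n\<ge>1. x n = c1 / Gamma \<alpha> * (real n * h) powr (\<alpha> - 1)
            - h powr \<alpha> / Gamma \<alpha> * (\<Sum>k<n. real (n - k) powr (\<alpha> - 1) * G (x k))"
      and U: "U = U_pow \<alpha>"
    have U0: "U 0 = 0" by (simp add: U U_pow_def)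
    define K where "K = c1 / Gamma \<alpha> * h powr (\<alpha> - 1)"
    have xs: "x n = K * U n - C * (\<Sum>k<n. G (x k) * U (n-k))" if "n \<ge> 1" for n
    proof -
      have "(real n * h) powr (\<alpha> - 1) = real n powr (\<alpha> - 1) * h powr (\<alpha> - 1)"
        using hpos by (simp add: powr_mult)
      thus ?thesis using xc[rule_format, OF that]
        by (simp add: K_def C_def U U_pow_eq mult_ac)
    qed
    have kern: "\<And>n. 0 \<le> d n" "\<And>n. d (Suc n) \<le> d n" "d \<longlonglongrightarrow> 0"
        "filterlim (\<lambda>n. U (Suc n)) at_top sequentially"
      using U_pow_props[OF a1 a2] by (simp_all add: d_def U)
    show ?thesis
    proof (rule final[OF kern U0])
      show "(\<lambda>n. G (x (2*n+1))) \<longlonglongrightarrow> G x_o" "(\<lambda>n. G (x (2*n))) \<longlonglongrightarrow> G x_e" by (rule Go, rule Ge)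
      show "(\<lambda>n. K * d n) \<longlonglongrightarrow> K * 0" by (intro tendsto_mult tendsto_const kern(3))
      show "x (Suc n) - x n = K * d n - C * (\<Sum>k\<le>n. G (x k) * d (n-k))" if "n \<ge> 1" for n
        using caseC[OF xs U0 that] by (simp add: d_def Suc_diff_le)
    qed
  qed
qed

end
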